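(* Let $A,B\in\mathrm{SL}_2\mathbb{Z}$ be noncommuting, well oriented, with $2\le\mathrm{tr}(A)<\mathrm{tr}(B)$. If $[ab]<[b^2]$, then for every $s\ge1$ and $k_1,\dots,k_s\ge1$ we have $[ab^{k_1}ab^{k_2}\cdots ab^{k_s}]<[b^{k_1+\cdots+k_s+s}]$.
   Context: Words are finite strings over $\{a,b\}$; $\phi$ is the homomorphism with $\phi(a)=A,\phi(b)=B$, and $[w]=\mathrm{tr}(\phi(w))$. Fixed points are for the Möbius action on $\partial\mathcal{H}=\mathbb{P}^1\mathbb{R}$; $\alpha^\pm$ ($\beta^\pm$) are the attracting/repelling fixed points of $A$ ($B$), both equal to the unique fixed point if parabolic. With $\partial\mathcal{H}$ cyclically ordered and $[\alpha,\beta]$ the closed counterclockwise interval from $\alpha$ to $\beta$, let $I^+=\{\alpha^+\}$ if $\alpha^+=\beta^+$, and otherwise the one of $[\alpha^+,\beta^+],[\beta^+,\alpha^+]$ mapped into itself by both $A$ and $B$ (if it exists); define $I^-$ likewise with $A^{-1},B^{-1},\alpha^-,\beta^-$. The pair is coherently oriented if both exist, and well oriented if $A,B$ is coherently oriented but $A,B^{-1}$ is not. *)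

theory Defs
  imports "HOL-Analysis.Analysis"
begin

definition sl2z :: "real^2^2 \<Rightarrow> bool" where
  "sl2z M \<longleftrightarrow> det M = 1 \<and> (\<forall>i j. M $ i $ j \<in> \<int>)"

datatype letter = La | Lb

definition phi :: "real^2^2 \<Rightarrow> real^2^2 \<Rightarrow> letter list \<Rightarrow> real^2^2" where
  "phi A B w = foldr (\<lambda>l M. (case l of La \<Rightarrow> A | Lb \<Rightarrow> B) ** M) w (mat 1)"

definition wtr :: "real^2^2 \<Rightarrow> real^2^2 \<Rightarrow> letter list \<Rightarrow> real" where
  "wtr A B w = trace (phi A B w)"

text \<open>The projective line: Some x is the real number x, None is infinity.\<close>
type_synonym p1 = "real option"

definition mob :: "real^2^2 \<Rightarrow> p1 \<Rightarrow> p1" where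
  "mob M p = (case p of
      Some x \<Rightarrow> (if M$2$1 * x + M$2$2 = 0 then None
                  else Some ((M$1$1 * x + M$1$2) / (M$2$1 * x + M$2$2)))
    | None \<Rightarrow> (if M$2$1 = 0 then None else Some (M$1$1 / M$2$1)))"

text \<open>Eigenvalue of M on the line representing a fixed point p
  (eigenvector (x,1) for Some x, (1,0) for None).\<close>
definition multiplier :: "real^2^2 \<Rightarrow> p1 \<Rightarrow> real" where
  "multiplier M p = (case p of Some x \<Rightarrow> M$2$1 * x + M$2$2 | None \<Rightarrow> M$1$1)"

definition attracting_fp :: "real^2^2 \<Rightarrow> p1 \<Rightarrow> bool" where
  "attracting_fp M p \<longleftrightarrow> mob M p = p \<and>
     (\<forall>q. mob M q = q \<longrightarrow> \<bar>multiplier M q\<bar> \<le> \<bar>multiplier M p\<bar>)"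

definition repelling_fp :: "real^2^2 \<Rightarrow> p1 \<Rightarrow> bool" where
  "repelling_fp M p \<longleftrightarrow> mob M p = p \<and>
     (\<forall>q. mob M q = q \<longrightarrow> \<bar>multiplier M p\<bar> \<le> \<bar>multiplier M q\<bar>)"

text \<open>Closed counterclockwise interval from alpha to beta (counterclockwise = increasing
  direction on the real line, then through infinity).\<close>
definition ccw_int :: "p1 \<Rightarrow> p1 \<Rightarrow> p1 set" where
  "ccw_int \<alpha> \<beta> = (case (\<alpha>, \<beta>) of
      (Some x, Some y) \<Rightarrow> (if x \<le> y then Some ` {x..y}
                           else insert None (Some ` ({x..} \<union> {..y})))
    | (Some x, None) \<Rightarrow> insert None (Some ` {x..})
    | (None, Some y) \<Rightarrow> insert None (Some ` {..y})
    | (None, None) \<Rightarrow> {None})"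

definition invariant_int :: "real^2^2 \<Rightarrow> p1 set \<Rightarrow> bool" where
  "invariant_int M S \<longleftrightarrow> mob M ` S \<subseteq> S"

definition Iplus_exists :: "real^2^2 \<Rightarrow> real^2^2 \<Rightarrow> bool" where
  "Iplus_exists A B \<longleftrightarrow> (\<exists>\<alpha> \<beta>. attracting_fp A \<alpha> \<and> attracting_fp B \<beta> \<and>
     (\<alpha> = \<beta> \<or>
      (invariant_int A (ccw_int \<alpha> \<beta>) \<and> invariant_int B (ccw_int \<alpha> \<beta>)) \<or>
      (invariant_int A (ccw_int \<beta> \<alpha>) \<and> invariant_int B (ccw_int \<beta> \<alpha>))))"

definition Iminus_exists :: "real^2^2 \<Rightarrow> real^2^2 \<Rightarrow> bool" where
  "Iminus_exists A B \<longleftrightarrow> (\<exists>\<alpha> \<beta>. repelling_fp A \<alpha> \<and> repelling_fp B \<beta> \<and>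
     (\<alpha> = \<beta> \<or>
      (invariant_int (matrix_inv A) (ccw_int \<alpha> \<beta>) \<and> invariant_int (matrix_inv B) (ccw_int \<alpha> \<beta>)) \<or>
      (invariant_int (matrix_inv A) (ccw_int \<beta> \<alpha>) \<and> invariant_int (matrix_inv B) (ccw_int \<beta> \<alpha>))))"

definition coherently_oriented :: "real^2^2 \<Rightarrow> real^2^2 \<Rightarrow> bool" where
  "coherently_oriented A B \<longleftrightarrow> Iplus_exists A B \<and> Iminus_exists A B"

definition well_oriented :: "real^2^2 \<Rightarrow> real^2^2 \<Rightarrow> bool" where
  "well_oriented A B \<longleftrightarrow> coherently_oriented A B \<and> \<not> coherently_oriented A (matrix_inv B)"

end

theory Submission
  imports Defs
begin


definition mk2 :: "real \<Rightarrow> real \<Rightarrow> real \<Rightarrow> real \<Rightarrow> real^2^2" where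
  "mk2 p q r s = vector [vector [p, q], vector [r, s]]"

lemma mk2_nth[simp]: "mk2 p q r s $ 1 $ 1 = p" "mk2 p q r s $ 1 $ 2 = q"
  "mk2 p q r s $ 2 $ 1 = r" "mk2 p q r s $ 2 $ 2 = s"
  by (simp_all add: mk2_def)

lemma mat2_eq: "(X::real^2^2) = Y \<longleftrightarrow> X$1$1 = Y$1$1 \<and> X$1$2 = Y$1$2 \<and> X$2$1 = Y$2$1 \<and> X$2$2 = Y$2$2"
  by (auto simp: vec_eq_iff forall_2)

lemma mult2: "((X::real^2^2) ** Y) $ i $ j = X$i$1 * Y$1$j + X$i$2 * Y$2$j"
  by (simp add: matrix_matrix_mult_def sum_2)

lemma trace2: "trace (X::real^2^2) = X$1$1 + X$2$2"
  by (simp add: trace_def sum_2)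

lemma mat1_2[simp]: "(mat 1::real^2^2) $1$1 = 1" "(mat 1::real^2^2) $1$2 = 0"
  "(mat 1::real^2^2) $2$1 = 0" "(mat 1::real^2^2) $2$2 = 1"
  by (simp_all add: mat_def)

lemma phi_Nil[simp]: "phi A B [] = mat 1" by (simp add: phi_def)
lemma phi_Cons[simp]: "phi A B (l # w) = (case l of La \<Rightarrow> A | Lb \<Rightarrow> B) ** phi A B w"
  by (simp add: phi_def)
lemma phi_append: "phi A B (u @ v) = phi A B u ** phi A B v"
  by (induction u) (auto simp: matrix_mul_assoc)


lemma sim_phi:
  assumes "A ** P = P ** A'" "B ** P = P ** B'"
  shows "phi A B w ** P = P ** phi A' B' w"
proof (induction w)
  case Nil then show ?case by simp
next
  case (Cons l w)
  have "phi A B (l # w) ** P = (case l of La \<Rightarrow> A | Lb \<Rightarrow> B) ** (phi A B w ** P)"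
    by (simp add: matrix_mul_assoc)
  also have "\<dots> = ((case l of La \<Rightarrow> A | Lb \<Rightarrow> B) ** P) ** phi A' B' w"
    by (simp add: Cons matrix_mul_assoc)
  also have "\<dots> = P ** phi A' B' (l # w)"
    using assms by (cases l) (simp_all add: matrix_mul_assoc)
  finally show ?case .
qed

lemma sim_wtr:
  assumes "det (P::real^2^2) \<noteq> 0" "A ** P = P ** A'" "B ** P = P ** B'"
  shows "wtr A B w = wtr A' B' w"
proof -
  define d where "d = det P"
  have d: "d = P$1$1 * P$2$2 - P$1$2 * P$2$1" "d \<noteq> 0" using assms(1) by (simp_all add: d_def det_2)
  define Q where "Q = mk2 (P$2$2/d) (-P$1$2/d) (-P$2$1/d) (P$1$1/d)"
  have QP: "Q ** P = mat 1" using d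
    by (simp add: mat2_eq mult2 Q_def field_simps, (simp add: algebra_simps)?)
  have PQ: "P ** Q = mat 1" using d
    by (simp add: mat2_eq mult2 Q_def field_simps, (simp add: algebra_simps)?)
  have "trace (phi A' B' w) = trace ((Q ** P) ** phi A' B' w)" by (simp add: QP)
  also have "\<dots> = trace (Q ** (phi A B w ** P))"
    using sim_phi[OF assms(2,3)] by (simp add: matrix_mul_assoc)
  also have "\<dots> = trace ((phi A B w ** P) ** Q)" by (rule trace_mul_sym)
  also have "\<dots> = trace (phi A B w)" by (simp add: PQ flip: matrix_mul_assoc)
  finally show ?thesis by (simp add: wtr_def)
qed

definition nonneg2 :: "real^2^2 \<Rightarrow> bool" where
  "nonneg2 X \<longleftrightarrow> 0 \<le> X$1$1 \<and> 0 \<le> X$1$2 \<and> 0 \<le> X$2$1 \<and> 0 \<le> X$2$2"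

definition goodw :: "real \<Rightarrow> real \<Rightarrow> real^2^2 \<Rightarrow> bool" where
  "goodw \<epsilon> c X \<longleftrightarrow> nonneg2 X \<and> X$1$1 + \<epsilon> * X$2$1 \<le> c \<and> X$1$2 + \<epsilon> * X$2$2 \<le> c * \<epsilon>"

definition good :: "real \<Rightarrow> real \<Rightarrow> real^2^2 \<Rightarrow> bool" where
  "good \<epsilon> c X \<longleftrightarrow> nonneg2 X \<and> X$1$1 + \<epsilon> * X$2$1 < c \<and> X$1$2 + \<epsilon> * X$2$2 < c * \<epsilon>"

lemma nonneg2_mult: "nonneg2 X \<Longrightarrow> nonneg2 Y \<Longrightarrow> nonneg2 (X ** Y)"
  by (simp add: nonneg2_def mult2)

lemma goodw_mult:
  assumes "goodw \<epsilon> c X" "goodw \<epsilon> d Y" "0 \<le> c"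
  shows "goodw \<epsilon> (c*d) (X ** Y)"
proof -
  have X: "nonneg2 X" "X$1$1 + \<epsilon> * X$2$1 \<le> c" "X$1$2 + \<epsilon> * X$2$2 \<le> c * \<epsilon>"
    using assms(1) by (auto simp: goodw_def)
  have Y: "nonneg2 Y" "Y$1$1 + \<epsilon> * Y$2$1 \<le> d" "Y$1$2 + \<epsilon> * Y$2$2 \<le> d * \<epsilon>"
    using assms(2) by (auto simp: goodw_def)
  have Yn: "0 \<le> Y$1$1" "0 \<le> Y$1$2" "0 \<le> Y$2$1" "0 \<le> Y$2$2" using Y(1) by (auto simp: nonneg2_def)
  have e1: "(X**Y)$1$1 + \<epsilon> * (X**Y)$2$1 = (X$1$1 + \<epsilon> * X$2$1) * Y$1$1 + (X$1$2 + \<epsilon> * X$2$2) * Y$2$1"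
    by (simp add: mult2 algebra_simps)
  have e2: "(X**Y)$1$2 + \<epsilon> * (X**Y)$2$2 = (X$1$1 + \<epsilon> * X$2$1) * Y$1$2 + (X$1$2 + \<epsilon> * X$2$2) * Y$2$2"
    by (simp add: mult2 algebra_simps)
  have "(X$1$1 + \<epsilon> * X$2$1) * Y$1$1 + (X$1$2 + \<epsilon> * X$2$2) * Y$2$1 \<le> c * Y$1$1 + (c*\<epsilon>) * Y$2$1"
    by (intro add_mono mult_right_mono X Yn)
  also have "\<dots> = c * (Y$1$1 + \<epsilon> * Y$2$1)" by (simp add: algebra_simps)
  also have "\<dots> \<le> c * d" by (intro mult_left_mono Y assms(3))
  finally have 1: "(X**Y)$1$1 + \<epsilon> * (X**Y)$2$1 \<le> c * d" using e1 by simp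
  have "(X$1$1 + \<epsilon> * X$2$1) * Y$1$2 + (X$1$2 + \<epsilon> * X$2$2) * Y$2$2 \<le> c * Y$1$2 + (c*\<epsilon>) * Y$2$2"
    by (intro add_mono mult_right_mono X Yn)
  also have "\<dots> = c * (Y$1$2 + \<epsilon> * Y$2$2)" by (simp add: algebra_simps)
  also have "\<dots> \<le> c * (d * \<epsilon>)" by (intro mult_left_mono Y assms(3))
  finally have 2: "(X**Y)$1$2 + \<epsilon> * (X**Y)$2$2 \<le> c * d * \<epsilon>" using e2 by simp
  show ?thesis using 1 2 nonneg2_mult[OF X(1) Y(1)] by (simp add: goodw_def)
qed

lemma good_mult:
  assumes "goodw \<epsilon> c X" "good \<epsilon> d Y" "0 < c"
  shows "good \<epsilon> (c*d) (X ** Y)"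
proof -
  have X: "nonneg2 X" "X$1$1 + \<epsilon> * X$2$1 \<le> c" "X$1$2 + \<epsilon> * X$2$2 \<le> c * \<epsilon>"
    using assms(1) by (auto simp: goodw_def)
  have Y: "nonneg2 Y" "Y$1$1 + \<epsilon> * Y$2$1 < d" "Y$1$2 + \<epsilon> * Y$2$2 < d * \<epsilon>"
    using assms(2) by (auto simp: good_def)
  have Yn: "0 \<le> Y$1$1" "0 \<le> Y$1$2" "0 \<le> Y$2$1" "0 \<le> Y$2$2" using Y(1) by (auto simp: nonneg2_def)
  have e1: "(X**Y)$1$1 + \<epsilon> * (X**Y)$2$1 = (X$1$1 + \<epsilon> * X$2$1) * Y$1$1 + (X$1$2 + \<epsilon> * X$2$2) * Y$2$1"
    by (simp add: mult2 algebra_simps)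
  have e2: "(X**Y)$1$2 + \<epsilon> * (X**Y)$2$2 = (X$1$1 + \<epsilon> * X$2$1) * Y$1$2 + (X$1$2 + \<epsilon> * X$2$2) * Y$2$2"
    by (simp add: mult2 algebra_simps)
  have "(X$1$1 + \<epsilon> * X$2$1) * Y$1$1 + (X$1$2 + \<epsilon> * X$2$2) * Y$2$1 \<le> c * Y$1$1 + (c*\<epsilon>) * Y$2$1"
    by (intro add_mono mult_right_mono X Yn)
  also have "\<dots> = c * (Y$1$1 + \<epsilon> * Y$2$1)" by (simp add: algebra_simps)
  also have "\<dots> < c * d" by (intro mult_strict_left_mono Y assms(3))
  finally have 1: "(X**Y)$1$1 + \<epsilon> * (X**Y)$2$1 < c * d" using e1 by simp
  have "(X$1$1 + \<epsilon> * X$2$1) * Y$1$2 + (X$1$2 + \<epsilon> * X$2$2) * Y$2$2 \<le> c * Y$1$2 + (c*\<epsilon>) * Y$2$2"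
    by (intro add_mono mult_right_mono X Yn)
  also have "\<dots> = c * (Y$1$2 + \<epsilon> * Y$2$2)" by (simp add: algebra_simps)
  also have "\<dots> < c * (d * \<epsilon>)" by (intro mult_strict_left_mono Y assms(3))
  finally have 2: "(X**Y)$1$2 + \<epsilon> * (X**Y)$2$2 < c * d * \<epsilon>" using e2 by simp
  show ?thesis using 1 2 nonneg2_mult[OF X(1) Y(1)] by (simp add: good_def)
qed

lemma good_goodw: "good \<epsilon> c X \<Longrightarrow> goodw \<epsilon> c X"
  by (auto simp: good_def goodw_def)

lemma good_trace:
  assumes "good \<epsilon> c W" "det W = 1" "0 < \<epsilon>" "0 < c"
  shows "trace W < c + 1/c"
proof -
  have W: "0 \<le> W$1$2" "0 \<le> W$2$1" "W$1$1 + \<epsilon> * W$2$1 < c" "W$1$2 + \<epsilon> * W$2$2 < c * \<epsilon>"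
    using assms(1) by (auto simp: good_def nonneg2_def)
  have d: "W$1$1 * W$2$2 - W$1$2 * W$2$1 = 1" using assms(2) by (simp add: det_2)
  have h1: "\<epsilon> * W$2$1 < c - W$1$1" using W by simp
  have h2: "W$1$2 < \<epsilon> * (c - W$2$2)" using W by (simp add: algebra_simps)
  have p1: "0 \<le> \<epsilon> * W$2$1" using W assms(3) by simp
  have "\<epsilon> * W$2$1 * W$1$2 \<le> (c - W$1$1) * W$1$2" using h1 W(1) by (intro mult_right_mono) auto
  also have "\<dots> < (c - W$1$1) * (\<epsilon> * (c - W$2$2))"
    using h1 h2 p1 by (intro mult_strict_left_mono) auto
  finally have "\<epsilon> * (W$1$2 * W$2$1) < \<epsilon> * ((c - W$1$1) * (c - W$2$2))" by (simp add: algebra_simps)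
  then have "W$1$2 * W$2$1 < (c - W$1$1) * (c - W$2$2)" using assms(3) by simp
  then have "c * (W$1$1 + W$2$2) < c * c + 1" using d by (simp add: algebra_simps)
  then have "W$1$1 + W$2$2 < (c * c + 1) / c" using assms(4) by (simp add: field_simps)
  also have "(c * c + 1) / c = c + 1/c" using assms(4) by (simp add: field_simps)
  finally show ?thesis by (simp add: trace2)
qed


lemma rot_list: "concat (map (\<lambda>k. La # replicate k Lb) ks) @ [La] = La # concat (map (\<lambda>k. replicate k Lb @ [La]) ks)"
  by (induction ks) auto

lemma rot_trace:
  assumes "ks \<noteq> []"
  shows "wtr A B (concat (map (\<lambda>k. La # replicate k Lb) ks)) = trace (phi A B (concat (map (\<lambda>k. replicate k Lb @ [La]) ks)))"
proof -
  obtain k ks' where ks: "ks = k # ks'" using assms by (cases ks) auto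
  define R where "R = replicate k Lb @ concat (map (\<lambda>k. La # replicate k Lb) ks')"
  have 1: "concat (map (\<lambda>k. La # replicate k Lb) ks) = La # R" by (simp add: ks R_def)
  have 2: "R @ [La] = concat (map (\<lambda>k. replicate k Lb @ [La]) ks)"
    by (simp add: R_def ks rot_list)
  have "wtr A B (La # R) = trace (A ** phi A B R)" by (simp add: wtr_def)
  also have "\<dots> = trace (phi A B R ** A)" by (rule trace_mul_sym)
  also have "\<dots> = trace (phi A B (R @ [La]))" by (simp add: phi_append)
  finally show ?thesis using 1 2 by simp
qed

lemma det_phi:
  assumes "det A = 1" "det B = 1"
  shows "det (phi A B w) = 1"
  by (induction w) (auto simp: det_mul assms split: letter.splits)

lemma phi_Bpow_goodw:
  assumes "goodw \<epsilon> lam B" "0 \<le> lam"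
  shows "goodw \<epsilon> (lam^k) (phi A B (replicate k Lb))"
proof (induction k)
  case 0
  then show ?case by (simp add: goodw_def nonneg2_def)
next
  case (Suc k)
  then show ?case using goodw_mult[OF assms(1) Suc assms(2)] by simp
qed

lemma phi_blocks_good:
  assumes "goodw \<epsilon> lam B" "good \<epsilon> lam A" "0 < lam" "ks \<noteq> []"
  shows "good \<epsilon> (lam^(sum_list ks + length ks)) (phi A B (concat (map (\<lambda>k. replicate k Lb @ [La]) ks)))"
  using assms(4)
proof (induction ks rule: list_nonempty_induct)
  case (single k)
  have "good \<epsilon> (lam^k * lam) (phi A B (replicate k Lb) ** A)"
    by (rule good_mult[OF phi_Bpow_goodw[OF assms(1)] assms(2)]) (use assms(3) in auto)
  then show ?case by (simp add: phi_append algebra_simps)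
next
  case (cons k ks)
  have g1: "good \<epsilon> (lam^k * lam) (phi A B (replicate k Lb) ** A)"
    by (rule good_mult[OF phi_Bpow_goodw[OF assms(1)] assms(2)]) (use assms(3) in auto)
  have "good \<epsilon> ((lam^k * lam) * lam^(sum_list ks + length ks))
     ((phi A B (replicate k Lb) ** A) ** phi A B (concat (map (\<lambda>k. replicate k Lb @ [La]) ks)))"
    by (rule good_mult[OF good_goodw[OF g1] cons.IH]) (use assms(3) in auto)
  moreover have "(lam^k * lam) * lam^(sum_list ks + length ks) = lam^(sum_list (k#ks) + length (k#ks))"
    by (simp add: power_add algebra_simps)
  ultimately show ?case by (simp add: phi_append matrix_mul_assoc)
qed

lemma phi_Bpow_ut:
  "phi A (mk2 l f 0 (1/l)) (replicate n Lb) $2$1 = 0 \<and>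
   phi A (mk2 l f 0 (1/l)) (replicate n Lb) $1$1 = l^n \<and>
   phi A (mk2 l f 0 (1/l)) (replicate n Lb) $2$2 = (1/l)^n"
  by (induction n) (auto simp: mult2)

lemma partII:
  fixes \<mu> lam e f \<epsilon> :: real
  assumes "1 \<le> \<mu>" "\<mu> < lam" "0 \<le> e" "0 \<le> f" "0 < \<epsilon>" "f \<le> \<epsilon>*(lam - 1/lam)" "\<epsilon>*e < lam - 1/\<mu>" "ks \<noteq> []"
  shows "wtr (mk2 (1/\<mu>) 0 e \<mu>) (mk2 lam f 0 (1/lam)) (concat (map (\<lambda>k. La # replicate k Lb) ks))
       < wtr (mk2 (1/\<mu>) 0 e \<mu>) (mk2 lam f 0 (1/lam)) (replicate (sum_list ks + length ks) Lb)"
proof -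
  define A' where "A' = mk2 (1/\<mu>) 0 e \<mu>"
  define B' where "B' = mk2 lam f 0 (1/lam)"
  define n where "n = sum_list ks + length ks"
  have lpos: "0 < lam" using assms(1,2) by simp
  have gA: "good \<epsilon> lam A'"
    using assms lpos by (simp add: good_def A'_def nonneg2_def)
  have "f + \<epsilon> * (1/lam) \<le> lam * \<epsilon>" using assms(6) by (simp add: algebra_simps)
  then have gB: "goodw \<epsilon> lam B'"
    using assms lpos by (simp add: goodw_def B'_def nonneg2_def)
  have dA: "det A' = 1" using assms(1) by (simp add: A'_def det_2)
  have dB: "det B' = 1" using lpos by (simp add: B'_def det_2)
  have g: "good \<epsilon> (lam^n) (phi A' B' (concat (map (\<lambda>k. replicate k Lb @ [La]) ks)))"
    unfolding n_def by (rule phi_blocks_good[OF gB gA lpos assms(8)])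
  have "wtr A' B' (concat (map (\<lambda>k. La # replicate k Lb) ks)) = trace (phi A' B' (concat (map (\<lambda>k. replicate k Lb @ [La]) ks)))"
    by (rule rot_trace[OF assms(8)])
  also have "\<dots> < lam^n + 1/lam^n"
    by (rule good_trace[OF g det_phi[OF dA dB] assms(5)]) (use lpos in simp)
  also have "lam^n + 1/lam^n = wtr A' B' (replicate n Lb)"
    using phi_Bpow_ut[of A' lam f n] by (simp add: wtr_def trace2 B'_def power_one_over)
  finally show ?thesis by (simp add: A'_def B'_def n_def)
qed


definition utw :: "real \<Rightarrow> real^2^2 \<Rightarrow> bool" where
  "utw c X \<longleftrightarrow> X$2$1 = 0 \<and> X$1$1 * X$2$2 = 1 \<and> 1/c \<le> X$1$1 \<and> X$1$1 \<le> c"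

definition ut :: "real \<Rightarrow> real^2^2 \<Rightarrow> bool" where
  "ut c X \<longleftrightarrow> X$2$1 = 0 \<and> X$1$1 * X$2$2 = 1 \<and> 1/c < X$1$1 \<and> X$1$1 < c"

lemma utw_mult:
  assumes "utw c X" "utw d Y" "0 < c" "0 < d"
  shows "utw (c*d) (X ** Y)"
proof -
  have X: "X$2$1 = 0" "X$1$1 * X$2$2 = 1" "1/c \<le> X$1$1" "X$1$1 \<le> c" using assms(1) by (auto simp: utw_def)
  have Y: "Y$2$1 = 0" "Y$1$1 * Y$2$2 = 1" "1/d \<le> Y$1$1" "Y$1$1 \<le> d" using assms(2) by (auto simp: utw_def)
  have xp: "0 < X$1$1" using X(3) assms(3) by (smt (verit) divide_pos_pos)
  have yp: "0 < Y$1$1" using Y(3) assms(4) by (smt (verit) divide_pos_pos)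
  have "X$1$1 * Y$1$1 \<le> c * d" using X Y xp yp by (intro mult_mono) auto
  moreover have "(1/c) * (1/d) \<le> X$1$1 * Y$1$1" using X Y assms xp by (intro mult_mono) auto
  moreover have "(X$1$1 * Y$1$1) * (X$2$2 * Y$2$2) = 1" using X(2) Y(2) by (simp add: algebra_simps)
  ultimately show ?thesis using X Y by (simp add: utw_def mult2)
qed

lemma ut_mult:
  assumes "utw c X" "ut d Y" "0 < c" "0 < d"
  shows "ut (c*d) (X ** Y)"
proof -
  have X: "X$2$1 = 0" "X$1$1 * X$2$2 = 1" "1/c \<le> X$1$1" "X$1$1 \<le> c" using assms(1) by (auto simp: utw_def)
  have Y: "Y$2$1 = 0" "Y$1$1 * Y$2$2 = 1" "1/d < Y$1$1" "Y$1$1 < d" using assms(2) by (auto simp: ut_def)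
  have xp: "0 < X$1$1" using X(3) assms(3) by (smt (verit) divide_pos_pos)
  have yp: "0 < Y$1$1" using Y(3) assms(4) by (smt (verit) divide_pos_pos)
  have "X$1$1 * Y$1$1 < X$1$1 * d" using xp Y(4) by simp
  also have "\<dots> \<le> c * d" using X(4) assms(4) by simp
  finally have 1: "X$1$1 * Y$1$1 < c * d" .
  have "(1/c) * (1/d) < (1/c) * Y$1$1" using Y(3) assms(3) by (intro mult_strict_left_mono) auto
  also have "\<dots> \<le> X$1$1 * Y$1$1" using X(3) yp by (intro mult_right_mono) auto
  finally have 2: "(1/c) * (1/d) < X$1$1 * Y$1$1" .
  have "(X$1$1 * Y$1$1) * (X$2$2 * Y$2$2) = 1" using X(2) Y(2) by (simp add: algebra_simps)
  then show ?thesis using 1 2 X Y by (simp add: ut_def mult2)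
qed

lemma ut_utw: "ut c X \<Longrightarrow> utw c X" by (auto simp: ut_def utw_def)

lemma ut_trace:
  assumes "ut c W" "0 < c"
  shows "trace W < c + 1/c"
proof -
  define w where "w = W$1$1"
  have W: "W$1$1 * W$2$2 = 1" "1/c < w" "w < c" using assms(1) by (auto simp: ut_def w_def)
  have wp: "0 < w" using W(2) assms(2) by (smt (verit) divide_pos_pos)
  have w2: "W$2$2 = 1/w" using W(1) wp by (simp add: w_def field_simps)
  have cw: "1 < c * w" using W(2) assms(2) by (simp add: field_simps)
  have "0 < (c - w) * (c * w - 1)" using W(3) cw by simp
  then have "w + 1/w < c + 1/c" using wp assms(2) by (simp add: field_simps, (simp add: algebra_simps)?)
  then show ?thesis by (simp add: trace2 w2 w_def)
qed

lemma phi_Bpow_utw: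
  assumes "utw lam B" "0 < lam"
  shows "utw (lam^k) (phi A B (replicate k Lb))"
proof (induction k)
  case 0
  then show ?case by (simp add: utw_def)
next
  case (Suc k)
  then show ?case using utw_mult[OF assms(1) Suc assms(2)] assms(2) by simp
qed

lemma phi_blocks_ut:
  assumes "utw lam B" "ut lam A" "0 < lam" "ks \<noteq> []"
  shows "ut (lam^(sum_list ks + length ks)) (phi A B (concat (map (\<lambda>k. replicate k Lb @ [La]) ks)))"
  using assms(4)
proof (induction ks rule: list_nonempty_induct)
  case (single k)
  have "ut (lam^k * lam) (phi A B (replicate k Lb) ** A)"
    by (rule ut_mult[OF phi_Bpow_utw[OF assms(1)] assms(2)]) (use assms(3) in auto)
  then show ?case by (simp add: phi_append algebra_simps)
next
  case (cons k ks)
  have g1: "ut (lam^k * lam) (phi A B (replicate k Lb) ** A)"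
    by (rule ut_mult[OF phi_Bpow_utw[OF assms(1)] assms(2)]) (use assms(3) in auto)
  have "ut ((lam^k * lam) * lam^(sum_list ks + length ks))
     ((phi A B (replicate k Lb) ** A) ** phi A B (concat (map (\<lambda>k. replicate k Lb @ [La]) ks)))"
    by (rule ut_mult[OF ut_utw[OF g1] cons.IH]) (use assms(3) in auto)
  moreover have "(lam^k * lam) * lam^(sum_list ks + length ks) = lam^(sum_list (k#ks) + length (k#ks))"
    by (simp add: power_add algebra_simps)
  ultimately show ?case by (simp add: phi_append matrix_mul_assoc)
qed

lemma partD:
  fixes \<mu> lam p q :: real
  assumes "1 \<le> \<mu>" "\<mu> < lam" "ks \<noteq> []"
  shows "wtr (mk2 \<mu> p 0 (1/\<mu>)) (mk2 lam q 0 (1/lam)) (concat (map (\<lambda>k. La # replicate k Lb) ks))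
       < wtr (mk2 \<mu> p 0 (1/\<mu>)) (mk2 lam q 0 (1/lam)) (replicate (sum_list ks + length ks) Lb)"
proof -
  define A' where "A' = mk2 \<mu> p 0 (1/\<mu>)"
  define B' where "B' = mk2 lam q 0 (1/lam)"
  define n where "n = sum_list ks + length ks"
  have lpos: "0 < lam" using assms(1,2) by simp
  have "1/lam < 1" using assms(1,2) by simp
  then have "1/lam < \<mu>" using assms(1) by linarith
  then have gA: "ut lam A'"
    using assms lpos by (simp add: ut_def A'_def)
  have "1/lam \<le> lam" using assms(1,2) \<open>1/lam < 1\<close> by linarith
  then have gB: "utw lam B'"
    using assms lpos by (simp add: utw_def B'_def)
  have g: "ut (lam^n) (phi A' B' (concat (map (\<lambda>k. replicate k Lb @ [La]) ks)))"
    unfolding n_def by (rule phi_blocks_ut[OF gB gA lpos assms(3)])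
  have "wtr A' B' (concat (map (\<lambda>k. La # replicate k Lb) ks)) = trace (phi A' B' (concat (map (\<lambda>k. replicate k Lb @ [La]) ks)))"
    by (rule rot_trace[OF assms(3)])
  also have "\<dots> < lam^n + 1/lam^n"
    by (rule ut_trace[OF g]) (use lpos in simp)
  also have "lam^n + 1/lam^n = wtr A' B' (replicate n Lb)"
    using phi_Bpow_ut[of A' lam q n] by (simp add: wtr_def trace2 B'_def power_one_over)
  finally show ?thesis by (simp add: A'_def B'_def n_def)
qed


lemma decomp:
  fixes m11 m12 m21 m22 a1 a2 c1 c2 m D :: real
  assumes dt: "m11*m22 - m12*m21 = 1" and e1: "m11*a1 + m12*a2 = m*a1" and e2: "m21*a1 + m22*a2 = m*a2"
    and D: "D = a1*c2 - a2*c1" "D \<noteq> 0" and m: "m \<noteq> 0"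
  defines "p \<equiv> ((m11*c1 + m12*c2)*c2 - (m21*c1 + m22*c2)*c1) / D"
  shows "m11*c1 + m12*c2 = p * a1 + (1/m) * c1" "m21*c1 + m22*c2 = p * a2 + (1/m) * c2"
proof -
  define u1 where "u1 = m11*c1 + m12*c2"
  define u2 where "u2 = m21*c1 + m22*c2"
  have "m * (a1*u2 - a2*u1) = (m*a1)*u2 - (m*a2)*u1" by (simp add: algebra_simps)
  also have "\<dots> = (m11*a1 + m12*a2)*u2 - (m21*a1 + m22*a2)*u1" by (simp add: e1 e2)
  also have "\<dots> = (m11*m22 - m12*m21) * (a1*c2 - a2*c1)" by (simp add: u1_def u2_def algebra_simps)
  also have "\<dots> = D" by (simp add: dt D)
  finally have r: "a1*u2 - a2*u1 = D / m" using m by (simp add: field_simps)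
  have c1: "(u1*c2 - u2*c1) * a1 + (a1*u2 - a2*u1) * c1 = u1 * D" by (simp add: D algebra_simps)
  have c2: "(u1*c2 - u2*c1) * a2 + (a1*u2 - a2*u1) * c2 = u2 * D" by (simp add: D algebra_simps)
  have pd: "p = (u1*c2 - u2*c1) / D" by (simp add: p_def u1_def u2_def)
  have im: "1/m = (a1*u2 - a2*u1)/D" using r D(2) m by (simp add: field_simps)
  have "p * a1 + (1/m) * c1 = ((u1*c2 - u2*c1) * a1 + (a1*u2 - a2*u1) * c1)/D"
    unfolding pd im using D(2) by (simp add: field_simps)
  also have "\<dots> = u1" using c1 D(2) by simp
  finally show "m11*c1 + m12*c2 = p * a1 + (1/m) * c1" by (simp add: u1_def)
  have "p * a2 + (1/m) * c2 = ((u1*c2 - u2*c1) * a2 + (a1*u2 - a2*u1) * c2)/D"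
    unfolding pd im using D(2) by (simp add: field_simps)
  also have "\<dots> = u2" using c2 D(2) by simp
  finally show "m21*c1 + m22*c2 = p * a2 + (1/m) * c2" by (simp add: u2_def)
qed

fun rep1 :: "p1 \<Rightarrow> real" where "rep1 (Some x) = x" | "rep1 None = 1"
fun rep2 :: "p1 \<Rightarrow> real" where "rep2 (Some x) = 1" | "rep2 None = 0"

lemma rep_inj: "\<alpha> \<noteq> \<beta> \<Longrightarrow> rep1 \<alpha> * rep2 \<beta> - rep2 \<alpha> * rep1 \<beta> \<noteq> 0"
  by (cases \<alpha>; cases \<beta>) auto

lemma rep_nz: "rep1 \<alpha> \<noteq> 0 \<or> rep2 \<alpha> \<noteq> 0"
  by (cases \<alpha>) auto

lemma fix_eig:
  assumes "mob M q = q"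
  shows "M$1$1 * rep1 q + M$1$2 * rep2 q = multiplier M q * rep1 q \<and>
         M$2$1 * rep1 q + M$2$2 * rep2 q = multiplier M q * rep2 q"
proof (cases q)
  case None
  then have "M$2$1 = 0" using assms by (auto simp: mob_def split: if_splits)
  then show ?thesis using None by (simp add: multiplier_def)
next
  case (Some x)
  then have nz: "M$2$1 * x + M$2$2 \<noteq> 0" and
     eq: "(M$1$1 * x + M$1$2) / (M$2$1 * x + M$2$2) = x"
    using assms by (auto simp: mob_def split: if_splits)
  then show ?thesis using Some by (simp add: multiplier_def field_simps)
qed

lemma mob_rep:
  assumes "det M \<noteq> 0"
  shows "\<exists>c. c \<noteq> 0 \<and> M$1$1 * rep1 q + M$1$2 * rep2 q = c * rep1 (mob M q) \<and>
             M$2$1 * rep1 q + M$2$2 * rep2 q = c * rep2 (mob M q)"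
proof -
  have d: "M$1$1 * M$2$2 - M$1$2 * M$2$1 \<noteq> 0" using assms by (simp add: det_2)
  show ?thesis
  proof (cases q)
    case None
    show ?thesis
    proof (cases "M$2$1 = 0")
      case True
      then have "M$1$1 \<noteq> 0" using d by auto
      then show ?thesis using None True by (auto simp: mob_def)
    next
      case False
      then show ?thesis using None by (auto simp: mob_def)
    qed
  next
    case (Some x)
    show ?thesis
    proof (cases "M$2$1 * x + M$2$2 = 0")
      case True
      have "M$1$1 * x + M$1$2 \<noteq> 0"
      proof
        assume h: "M$1$1 * x + M$1$2 = 0"
        have "M$1$1 * M$2$2 - M$1$2 * M$2$1 = M$1$1 * (M$2$1 * x + M$2$2) - M$2$1 * (M$1$1 * x + M$1$2)"
          by (simp add: algebra_simps)
        then show False using d h True by simp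
      qed
      then show ?thesis using Some True by (auto simp: mob_def)
    next
      case False
      then show ?thesis using Some by (auto simp: mob_def field_simps)
    qed
  qed
qed

lemma ccw_end: "\<beta> \<in> ccw_int \<alpha> \<beta>" "\<alpha> \<in> ccw_int \<alpha> \<beta>"
  by (cases \<alpha>; cases \<beta>; auto simp: ccw_int_def)+

lemma arc0:
  assumes "\<alpha> \<noteq> \<beta>" "p \<in> ccw_int \<alpha> \<beta>"
  shows "(rep1 p * rep2 \<beta> - rep2 p * rep1 \<beta>) * (rep1 \<alpha> * rep2 p - rep2 \<alpha> * rep1 p) *
         (rep1 \<alpha> * rep2 \<beta> - rep2 \<alpha> * rep1 \<beta>) \<le> 0"
proof (cases \<alpha>)
  case None
  show ?thesis
  proof (cases \<beta>)
    case None2: None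
    then show ?thesis using None assms by simp
  next
    case (Some y)
    then show ?thesis using None assms by (auto simp: ccw_int_def)
  qed
next
  case (Some x)
  show ?thesis
  proof (cases \<beta>)
    case None
    then show ?thesis using Some assms by (auto simp: ccw_int_def)
  next
    case Some2: (Some y)
    show ?thesis
    proof (cases "x \<le> y")
      case True
      then obtain z where z: "p = Some z" "x \<le> z" "z \<le> y" using Some Some2 assms by (auto simp: ccw_int_def)
      have "0 \<le> (y - z) * (z - x)" using z by simp
      then have "0 \<le> (y - z) * (z - x) * (y - x)" using True by simp
      then show ?thesis using z Some Some2 by (simp add: algebra_simps)
    next
      case False
      then have pc: "p = None \<or> (\<exists>z. p = Some z \<and> (x \<le> z \<or> z \<le> y))"
        using Some Some2 assms by (auto simp: ccw_int_def)
      then show ?thesis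
      proof
        assume "p = None" then show ?thesis using Some Some2 False by simp
      next
        assume "\<exists>z. p = Some z \<and> (x \<le> z \<or> z \<le> y)"
        then obtain z where z: "p = Some z" "x \<le> z \<or> z \<le> y" by blast
        have "(z - y) * (x - z) \<le> 0" using z False by (auto simp: mult_le_0_iff)
        then have "(z - y) * (x - z) * (x - y) \<le> 0" using False by (simp add: mult_le_0_iff)
        then show ?thesis using z Some Some2 by simp
      qed
    qed
  qed
qed

lemma arc:
  assumes "\<alpha> \<noteq> \<beta>" "p \<in> ccw_int \<alpha> \<beta>" "v1 = c * rep1 p" "v2 = c * rep2 p"
  shows "(v1 * rep2 \<beta> - v2 * rep1 \<beta>) * (rep1 \<alpha> * v2 - rep2 \<alpha> * v1) *
         (rep1 \<alpha> * rep2 \<beta> - rep2 \<alpha> * rep1 \<beta>) \<le> 0"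
proof -
  have "(v1 * rep2 \<beta> - v2 * rep1 \<beta>) * (rep1 \<alpha> * v2 - rep2 \<alpha> * v1) *
         (rep1 \<alpha> * rep2 \<beta> - rep2 \<alpha> * rep1 \<beta>) = c^2 * ((rep1 p * rep2 \<beta> - rep2 p * rep1 \<beta>) * (rep1 \<alpha> * rep2 p - rep2 \<alpha> * rep1 p) *
         (rep1 \<alpha> * rep2 \<beta> - rep2 \<alpha> * rep1 \<beta>))"
    by (simp add: assms(3,4) power2_eq_square algebra_simps)
  also have "\<dots> \<le> 0" using arc0[OF assms(1,2)] by (simp add: mult_nonneg_nonpos)
  finally show ?thesis .
qed





lemma eig_exists:
  assumes "det A = 1" "\<rho>*\<rho> - trace A * \<rho> + 1 = 0" "\<rho> \<noteq> 0"
  shows "\<exists>q. mob A q = q \<and> multiplier A q = \<rho>"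
proof -
  have d: "A$1$1 * A$2$2 - A$1$2 * A$2$1 = 1" using assms(1) by (simp add: det_2)
  have r: "\<rho>*\<rho> - (A$1$1 + A$2$2) * \<rho> + 1 = 0" using assms(2) by (simp add: trace2)
  show ?thesis
  proof (cases "A$2$1 = 0")
    case False
    define x where "x = (\<rho> - A$2$2) / A$2$1"
    have den: "A$2$1 * x + A$2$2 = \<rho>" using False by (simp add: x_def field_simps)
    have "(A$1$1 * x + A$1$2) * A$2$1 = (A$1$1 * (\<rho> - A$2$2) + A$1$2 * A$2$1)" using False
      by (simp add: x_def field_simps)
    also have "\<dots> = A$1$1 * \<rho> - (A$1$1 * A$2$2 - A$1$2 * A$2$1)" by (simp add: algebra_simps)
    also have "\<dots> = A$1$1 * \<rho> - 1" using d by simp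
    also have "\<dots> = \<rho> * (\<rho> - A$2$2)"
    proof -
      have "\<rho> * (\<rho> - A$2$2) = (\<rho>*\<rho> - (A$1$1 + A$2$2) * \<rho> + 1) + A$1$1 * \<rho> - 1"
        by (simp add: algebra_simps)
      then show ?thesis using r by simp
    qed
    also have "\<dots> = \<rho> * x * A$2$1" using False by (simp add: x_def field_simps)
    finally have "A$1$1 * x + A$1$2 = \<rho> * x" using False by simp
    then have "mob A (Some x) = Some x" using den assms(3) by (simp add: mob_def)
    moreover have "multiplier A (Some x) = \<rho>" using den by (simp add: multiplier_def)
    ultimately show ?thesis by blast
  next
    case True
    then have "(\<rho> - A$1$1) * (\<rho> - A$2$2) = 0" using d r by (simp add: algebra_simps)
    then have "\<rho> = A$1$1 \<or> \<rho> = A$2$2" by simp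
    then show ?thesis
    proof
      assume h: "\<rho> = A$1$1"
      have "mob A None = None" using True by (simp add: mob_def)
      moreover have "multiplier A None = \<rho>" using h by (simp add: multiplier_def)
      ultimately show ?thesis by blast
    next
      assume h: "\<rho> = A$2$2"
      show ?thesis
      proof (cases "\<rho> = A$1$1")
        case True2: True
        have "mob A None = None" using True by (simp add: mob_def)
        moreover have "multiplier A None = \<rho>" using True2 by (simp add: multiplier_def)
        ultimately show ?thesis by blast
      next
        case False
        define x where "x = A$1$2 / (A$2$2 - A$1$1)"
        have nz: "A$2$2 - A$1$1 \<noteq> 0" using False h by simp
        have "A$1$1 * x + A$1$2 = A$2$2 * x" using nz by (simp add: x_def field_simps)
        then have "mob A (Some x) = Some x" using True h assms(3) by (simp add: mob_def)
        moreover have "multiplier A (Some x) = \<rho>" using True h by (simp add: multiplier_def)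
        ultimately show ?thesis by blast
      qed
    qed
  qed
qed

lemma attr:
  assumes "det A = 1" "2 \<le> trace A" "attracting_fp A \<alpha>"
  shows "1 \<le> multiplier A \<alpha> \<and> multiplier A \<alpha> * (trace A - multiplier A \<alpha>) = 1"
proof -
  define m where "m = multiplier A \<alpha>"
  have fx: "mob A \<alpha> = \<alpha>" and mx: "\<And>q. mob A q = q \<Longrightarrow> \<bar>multiplier A q\<bar> \<le> \<bar>m\<bar>"
    using assms(3) by (auto simp: attracting_fp_def m_def)
  have e: "A$1$1 * rep1 \<alpha> + A$1$2 * rep2 \<alpha> = m * rep1 \<alpha>" "A$2$1 * rep1 \<alpha> + A$2$2 * rep2 \<alpha> = m * rep2 \<alpha>"
    using fix_eig[OF fx] by (auto simp: m_def)
  have d: "A$1$1 * A$2$2 - A$1$2 * A$2$1 = 1" using assms(1) by (simp add: det_2)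
  define Q where "Q = (A$1$1 - m) * (A$2$2 - m) - A$1$2 * A$2$1"
  have q1: "Q * rep1 \<alpha> = 0"
  proof -
    have "Q * rep1 \<alpha> = (A$2$2 - m) * ((A$1$1 - m) * rep1 \<alpha> + A$1$2 * rep2 \<alpha>) - A$1$2 * (A$2$1 * rep1 \<alpha> + (A$2$2 - m) * rep2 \<alpha>)"
      by (simp add: Q_def algebra_simps)
    also have "\<dots> = 0" using e by (simp add: algebra_simps)
    finally show ?thesis .
  qed
  have q2: "Q * rep2 \<alpha> = 0"
  proof -
    have "Q * rep2 \<alpha> = (A$1$1 - m) * (A$2$1 * rep1 \<alpha> + (A$2$2 - m) * rep2 \<alpha>) - A$2$1 * ((A$1$1 - m) * rep1 \<alpha> + A$1$2 * rep2 \<alpha>)"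
      by (simp add: Q_def algebra_simps)
    also have "\<dots> = 0" using e by (simp add: algebra_simps)
    finally show ?thesis .
  qed
  have "Q = 0" using q1 q2 rep_nz[of \<alpha>] by auto
  then have root: "m * m - trace A * m + 1 = 0" using d by (simp add: Q_def trace2 algebra_simps)
  have mpos: "0 < m"
  proof (rule ccontr)
    assume "\<not> 0 < m"
    then have "trace A * m \<le> 0" using assms(2) by (simp add: mult_nonneg_nonpos)
    moreover have "0 \<le> m * m" by simp
    ultimately show False using root by linarith
  qed
  have prod: "m * (trace A - m) = 1" using root by (simp add: algebra_simps)
  have "1 \<le> m"
  proof (rule ccontr)
    assume "\<not> 1 \<le> m"
    then have m1: "m < 1" by simp
    define \<rho> where "\<rho> = trace A - m"
    have "\<rho> * m = 1" using prod by (simp add: \<rho>_def algebra_simps)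
    then have "\<rho> = 1/m" using mpos by (simp add: field_simps)
    then have "1 < \<rho>" using m1 mpos by simp
    have "\<rho>*\<rho> - trace A * \<rho> + 1 = 0" using prod by (simp add: \<rho>_def algebra_simps)
    then obtain q where "mob A q = q" "multiplier A q = \<rho>"
      using eig_exists[OF assms(1)] \<open>1 < \<rho>\<close> by fastforce
    then have "\<bar>\<rho>\<bar> \<le> \<bar>m\<bar>" using mx by fastforce
    then show False using \<open>1 < \<rho>\<close> m1 mpos by simp
  qed
  then show ?thesis using prod by (simp add: m_def)
qed

lemma wtr_ab: "wtr A B [La, Lb] = trace (A ** B)" "wtr A B [Lb, Lb] = trace (B ** B)"
  by (simp_all add: wtr_def)

lemma sl2z_int:
  assumes "sl2z A" "sl2z B"
  shows "trace (A ** B) \<in> \<int>"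
proof -
  have "\<And>i j. A$i$j \<in> \<int>" "\<And>i j. B$i$j \<in> \<int>" using assms by (auto simp: sl2z_def)
  then show ?thesis by (simp add: trace2 mult2 Ints_add Ints_mult)
qed

lemma eps_exists:
  fixes L M e f :: real
  assumes "0 < L" "0 < M" "0 \<le> e" "0 \<le> f" "e * f < M * L"
  shows "\<exists>\<epsilon>>0. f \<le> \<epsilon> * L \<and> \<epsilon> * e < M"
proof -
  define g where "g = M - e * f / L"
  have gp: "0 < g" using assms by (simp add: g_def field_simps)
  define \<delta> where "\<delta> = g / (2 * (e + 1))"
  have dp: "0 < \<delta>" using gp assms(3) by (simp add: \<delta>_def)
  define \<epsilon> where "\<epsilon> = f / L + \<delta>"
  have "0 \<le> f / L" using assms by simp
  then have "0 < \<epsilon>" using dp by (simp add: \<epsilon>_def)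
  moreover have "f \<le> \<epsilon> * L" using assms(1) dp by (simp add: \<epsilon>_def algebra_simps)
  moreover have "\<epsilon> * e < M"
  proof -
    have "\<delta> * e \<le> g / 2"
    proof -
      have "\<delta> * e = g / 2 * (e / (e + 1))" using assms(3) by (simp add: \<delta>_def field_simps)
      also have "\<dots> \<le> g / 2 * 1" using gp assms(3) by (intro mult_left_mono) auto
      finally show ?thesis by simp
    qed
    then have "\<epsilon> * e \<le> e * f / L + g / 2" by (simp add: \<epsilon>_def algebra_simps)
    also have "\<dots> < M" using gp unfolding g_def by (simp add: field_simps)
    finally show ?thesis .
  qed
  ultimately show ?thesis by blast
qed


lemma nondeg:
  fixes A B :: "real^2^2" and a1 a2 b1 b2 \<mu> lam e f :: real
  assumes dA: "det A = 1" and dB: "det B = 1"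
    and ea: "A$1$1*a1 + A$1$2*a2 = \<mu>*a1" "A$2$1*a1 + A$2$2*a2 = \<mu>*a2"
    and eb: "B$1$1*b1 + B$1$2*b2 = lam*b1" "B$2$1*b1 + B$2$2*b2 = lam*b2"
    and Ab: "A$1$1*b1 + A$1$2*b2 = e*a1 + (1/\<mu>)*b1" "A$2$1*b1 + A$2$2*b2 = e*a2 + (1/\<mu>)*b2"
    and Ba: "B$1$1*a1 + B$1$2*a2 = f*b1 + (1/lam)*a1" "B$2$1*a1 + B$2$2*a2 = f*b2 + (1/lam)*a2"
    and D: "b1*a2 - a1*b2 \<noteq> 0"
    and mu: "1 \<le> \<mu>" "\<mu> < lam" and ef: "0 \<le> e" "0 \<le> f"
    and tr: "wtr A B [La,Lb] + 1 \<le> wtr A B [Lb,Lb]"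
    and ks: "ks \<noteq> []"
  shows "wtr A B (concat (map (\<lambda>k. La # replicate k Lb) ks)) < wtr A B (replicate (sum_list ks + length ks) Lb)"
proof -
  define P where "P = mk2 b1 a1 b2 a2"
  define A' where "A' = mk2 (1/\<mu>) 0 e \<mu>"
  define B' where "B' = mk2 lam f 0 (1/lam)"
  have dP: "det P \<noteq> 0" using D by (simp add: P_def det_2)
  have AP: "A ** P = P ** A'"
    unfolding mat2_eq mult2 using ea Ab by (simp add: P_def A'_def algebra_simps)
  have BP: "B ** P = P ** B'"
    unfolding mat2_eq mult2 using eb Ba by (simp add: P_def B'_def algebra_simps)
  have sim: "\<And>w. wtr A B w = wtr A' B' w" by (rule sim_wtr[OF dP AP BP])
  have lpos: "0 < lam" "1 < lam" using mu by auto
  have mpos: "0 < \<mu>" using mu by simp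
  have t1: "wtr A' B' [La,Lb] = lam/\<mu> + e*f + \<mu>/lam"
    by (simp add: wtr_def trace2 mult2 A'_def B'_def)
  have t2: "wtr A' B' [Lb,Lb] = lam*lam + 1/lam * (1/lam)"
    by (simp add: wtr_def trace2 mult2 B'_def)
  have ef1: "e*f \<le> lam*lam + 1/lam * (1/lam) - 1 - lam/\<mu> - \<mu>/lam"
    using tr t1 t2 sim by simp
  have k1: "1/lam * (1/lam) < \<mu>/lam + 1/(\<mu>*lam)"
  proof -
    have "1/lam * (1/lam) < 1 * (1/lam)" using lpos by (intro mult_strict_right_mono) auto
    also have "\<dots> \<le> \<mu>/lam" using mu lpos by (simp add: divide_right_mono)
    also have "\<dots> < \<mu>/lam + 1/(\<mu>*lam)" using mpos lpos by simp
    finally show ?thesis .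
  qed
  have k2: "(lam - 1/\<mu>) * (lam - 1/lam) = lam*lam - 1 - lam/\<mu> + 1/(\<mu>*lam)"
    using mpos lpos by (simp add: field_simps)
  have efb: "e*f < (lam - 1/\<mu>) * (lam - 1/lam)" using ef1 k1 k2 by linarith
  have "1/lam < 1" using lpos by simp
  then have Lp: "0 < lam - 1/lam" using lpos by linarith
  have Mp: "0 < lam - 1/\<mu>"
  proof -
    have "1/\<mu> \<le> 1" using mu by simp
    then show ?thesis using lpos by linarith
  qed
  obtain \<epsilon> where eps: "0 < \<epsilon>" "f \<le> \<epsilon> * (lam - 1/lam)" "\<epsilon> * e < lam - 1/\<mu>"
    using eps_exists[OF Lp Mp ef efb] by blast
  have "wtr A' B' (concat (map (\<lambda>k. La # replicate k Lb) ks)) < wtr A' B' (replicate (sum_list ks + length ks) Lb)"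
    unfolding A'_def B'_def
    by (rule partII[OF mu ef eps(1) eps(2) eps(3) ks])
  then show ?thesis using sim by simp
qed





lemma deg:
  fixes A B :: "real^2^2" and a1 a2 \<mu> lam :: real
  assumes dA: "det A = 1" and dB: "det B = 1"
    and ea: "A$1$1*a1 + A$1$2*a2 = \<mu>*a1" "A$2$1*a1 + A$2$2*a2 = \<mu>*a2"
    and eb: "B$1$1*a1 + B$1$2*a2 = lam*a1" "B$2$1*a1 + B$2$2*a2 = lam*a2"
    and anz: "a1 \<noteq> 0 \<or> a2 \<noteq> 0"
    and mu: "1 \<le> \<mu>" "\<mu> < lam"
    and ks: "ks \<noteq> []"
  shows "wtr A B (concat (map (\<lambda>k. La # replicate k Lb) ks)) < wtr A B (replicate (sum_list ks + length ks) Lb)"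
proof -
  obtain c1 c2 :: real where D: "a1*c2 - a2*c1 \<noteq> 0"
  proof (cases "a2 = 0")
    case True
    then show ?thesis by (intro that[of 1 0]) (use anz in simp)
  next
    case False
    then show ?thesis by (intro that[of 0 1]) simp
  qed
  define D where "D = a1*c2 - a2*c1"
  have mpos: "\<mu> \<noteq> 0" "lam \<noteq> 0" using mu by auto
  have dA2: "A$1$1*A$2$2 - A$1$2*A$2$1 = 1" using dA by (simp add: det_2)
  have dB2: "B$1$1*B$2$2 - B$1$2*B$2$1 = 1" using dB by (simp add: det_2)
  define pA where "pA = ((A$1$1*c1 + A$1$2*c2)*c2 - (A$2$1*c1 + A$2$2*c2)*c1) / D"
  define pB where "pB = ((B$1$1*c1 + B$1$2*c2)*c2 - (B$2$1*c1 + B$2$2*c2)*c1) / D"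
  note dcA = decomp[OF dA2 ea D_def D[folded D_def] mpos(1), folded pA_def]
  note dcB = decomp[OF dB2 eb D_def D[folded D_def] mpos(2), folded pB_def]
  define P where "P = mk2 a1 c1 a2 c2"
  define A' where "A' = mk2 \<mu> pA 0 (1/\<mu>)"
  define B' where "B' = mk2 lam pB 0 (1/lam)"
  have dP: "det P \<noteq> 0" using D by (simp add: P_def det_2 algebra_simps)
  have AP: "A ** P = P ** A'"
    unfolding mat2_eq mult2 using ea dcA by (simp add: P_def A'_def algebra_simps)
  have BP: "B ** P = P ** B'"
    unfolding mat2_eq mult2 using eb dcB by (simp add: P_def B'_def algebra_simps)
  have sim: "\<And>w. wtr A B w = wtr A' B' w" by (rule sim_wtr[OF dP AP BP])
  have "wtr A' B' (concat (map (\<lambda>k. La # replicate k Lb) ks)) < wtr A' B' (replicate (sum_list ks + length ks) Lb)"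
    unfolding A'_def B'_def by (rule partD[OF mu ks])
  then show ?thesis using sim by simp
qed

lemma signs:
  fixes a1 a2 b1 b2 v1 v2 s r c :: real
  assumes "\<alpha> \<noteq> \<beta>" "p \<in> ccw_int \<alpha> \<beta>" "v1 = c * rep1 p" "v2 = c * rep2 p"
    "v1 = s * rep1 \<alpha> + r * rep1 \<beta>" "v2 = s * rep2 \<alpha> + r * rep2 \<beta>"
  shows "s * r * (rep1 \<alpha> * rep2 \<beta> - rep2 \<alpha> * rep1 \<beta>)^3 \<le> 0"
proof -
  define E where "E = rep1 \<alpha> * rep2 \<beta> - rep2 \<alpha> * rep1 \<beta>"
  have h: "(v1 * rep2 \<beta> - v2 * rep1 \<beta>) * (rep1 \<alpha> * v2 - rep2 \<alpha> * v1) * E \<le> 0"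
    using arc[OF assms(1-4)] by (simp add: E_def)
  have "v1 * rep2 \<beta> - v2 * rep1 \<beta> = s * E" by (simp add: assms(5,6) E_def algebra_simps)
  moreover have "rep1 \<alpha> * v2 - rep2 \<alpha> * v1 = r * E" by (simp add: assms(5,6) E_def algebra_simps)
  ultimately have "s * E * (r * E) * E \<le> 0" using h by simp
  then have "s * r * (E * E * E) \<le> 0" by (simp add: algebra_simps)
  then show ?thesis by (simp add: E_def power3_eq_cube)
qed

lemma int_step: "(x::real) \<in> \<int> \<Longrightarrow> y \<in> \<int> \<Longrightarrow> x < y \<Longrightarrow> x + 1 \<le> y"
  by (elim Ints_cases) simp



theorem lemma5p6:
  fixes A B :: "real^2^2"
  assumes "sl2z A" and "sl2z B"
    and "A ** B \<noteq> B ** A"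
    and "well_oriented A B"
    and "2 \<le> trace A" and "trace A < trace B"
    and "wtr A B [La, Lb] < wtr A B [Lb, Lb]"
  shows "\<forall>ks::nat list. ks \<noteq> [] \<and> (\<forall>k\<in>set ks. 1 \<le> k) \<longrightarrow>
           wtr A B (concat (map (\<lambda>k. La # replicate k Lb) ks))
             < wtr A B (replicate (sum_list ks + length ks) Lb)"
proof (intro allI impI)
  fix ks :: "nat list"
  assume "ks \<noteq> [] \<and> (\<forall>k\<in>set ks. 1 \<le> k)"
  then have ks: "ks \<noteq> []" by simp
  have dA: "det A = 1" and dB: "det B = 1" using assms(1,2) by (auto simp: sl2z_def)
  have tr: "wtr A B [La,Lb] + 1 \<le> wtr A B [Lb,Lb]"
    using int_step[OF _ _ assms(7)] sl2z_int[OF assms(1,2)] sl2z_int[OF assms(2,2)] by (simp add: wtr_ab)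
  from assms(4) have "Iplus_exists A B" by (simp add: well_oriented_def coherently_oriented_def)
  then obtain \<alpha> \<beta> where fa: "attracting_fp A \<alpha>" and fb: "attracting_fp B \<beta>"
    and alt: "\<alpha> = \<beta> \<or>
      (invariant_int A (ccw_int \<alpha> \<beta>) \<and> invariant_int B (ccw_int \<alpha> \<beta>)) \<or>
      (invariant_int A (ccw_int \<beta> \<alpha>) \<and> invariant_int B (ccw_int \<beta> \<alpha>))"
    by (auto simp: Iplus_exists_def)
  define \<mu> where "\<mu> = multiplier A \<alpha>"
  define lam where "lam = multiplier B \<beta>"
  have mA: "1 \<le> \<mu>" "\<mu> * (trace A - \<mu>) = 1" using attr[OF dA assms(5) fa] by (auto simp: \<mu>_def)
  have mB: "1 \<le> lam" "lam * (trace B - lam) = 1" using attr[OF dB _ fb] assms(5,6) by (auto simp: lam_def)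
  have xA: "trace A = \<mu> + 1/\<mu>" using mA by (simp add: field_simps, (simp add: algebra_simps)?)
  have xB: "trace B = lam + 1/lam" using mB by (simp add: field_simps, (simp add: algebra_simps)?)
  have mulam: "\<mu> < lam"
  proof (rule ccontr)
    assume "\<not> \<mu> < lam"
    then have le: "0 \<le> \<mu> - lam" by simp
    have ml: "1 \<le> \<mu> * lam" using mult_mono[of 1 \<mu> 1 lam] mA(1) mB(1) by simp
    have mp: "0 < \<mu> * lam" using ml by simp
    have "(\<mu> + 1/\<mu>) - (lam + 1/lam) = (\<mu> - lam) * (\<mu> * lam - 1) / (\<mu> * lam)"
      using mA(1) mB(1) by (simp add: field_simps, (simp add: algebra_simps)?)
    moreover have "0 \<le> (\<mu> - lam) * (\<mu> * lam - 1) / (\<mu> * lam)"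
      using le ml mp by (intro divide_nonneg_pos mult_nonneg_nonneg) auto
    ultimately show False using xA xB assms(6) by linarith
  qed
  have ea: "A$1$1 * rep1 \<alpha> + A$1$2 * rep2 \<alpha> = \<mu> * rep1 \<alpha>" "A$2$1 * rep1 \<alpha> + A$2$2 * rep2 \<alpha> = \<mu> * rep2 \<alpha>"
    using fix_eig[of A \<alpha>] fa by (auto simp: attracting_fp_def \<mu>_def)
  have eb: "B$1$1 * rep1 \<beta> + B$1$2 * rep2 \<beta> = lam * rep1 \<beta>" "B$2$1 * rep1 \<beta> + B$2$2 * rep2 \<beta> = lam * rep2 \<beta>"
    using fix_eig[of B \<beta>] fb by (auto simp: attracting_fp_def lam_def)
  show "wtr A B (concat (map (\<lambda>k. La # replicate k Lb) ks)) < wtr A B (replicate (sum_list ks + length ks) Lb)"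
  proof (cases "\<alpha> = \<beta>")
    case True
    show ?thesis
      by (rule deg[OF dA dB ea eb[folded True] rep_nz mA(1) mulam ks])
  next
    case False
    define a1 where "a1 = rep1 \<alpha>"
    define a2 where "a2 = rep2 \<alpha>"
    define b1 where "b1 = rep1 \<beta>"
    define b2 where "b2 = rep2 \<beta>"
    define E where "E = a1 * b2 - a2 * b1"
    have Enz: "E \<noteq> 0" using rep_inj[OF False] by (simp add: E_def a1_def a2_def b1_def b2_def)
    have mpos: "\<mu> \<noteq> 0" "lam \<noteq> 0" using mA mB by auto
    have dA2: "A$1$1*A$2$2 - A$1$2*A$2$1 = 1" using dA by (simp add: det_2)
    have dB2: "B$1$1*B$2$2 - B$1$2*B$2$1 = 1" using dB by (simp add: det_2)
    define e where "e = ((A$1$1*b1 + A$1$2*b2)*b2 - (A$2$1*b1 + A$2$2*b2)*b1) / E"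
    define f where "f = ((B$1$1*a1 + B$1$2*a2)*a2 - (B$2$1*a1 + B$2$2*a2)*a1) / (b1*a2 - b2*a1)"
    have E': "b1*a2 - b2*a1 \<noteq> 0" using Enz by (simp add: E_def algebra_simps)
    note dcA = decomp[OF dA2 ea[folded a1_def a2_def] E_def[unfolded a1_def a2_def b1_def b2_def, folded a1_def a2_def b1_def b2_def] Enz mpos(1), folded e_def]
    note dcB = decomp[OF dB2 eb[folded b1_def b2_def] refl E' mpos(2), folded f_def]
    have Ab: "A$1$1*b1 + A$1$2*b2 = e*a1 + (1/\<mu>)*b1" "A$2$1*b1 + A$2$2*b2 = e*a2 + (1/\<mu>)*b2"
      using dcA by auto
    have Ba: "B$1$1*a1 + B$1$2*a2 = f*b1 + (1/lam)*a1" "B$2$1*a1 + B$2$2*a2 = f*b2 + (1/lam)*a2"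
      using dcB by auto
    obtain cA where cA: "cA \<noteq> 0" "A$1$1 * b1 + A$1$2 * b2 = cA * rep1 (mob A \<beta>)"
        "A$2$1 * b1 + A$2$2 * b2 = cA * rep2 (mob A \<beta>)"
      using mob_rep[of A \<beta>] dA by (auto simp: b1_def b2_def)
    obtain cB where cB: "cB \<noteq> 0" "B$1$1 * a1 + B$1$2 * a2 = cB * rep1 (mob B \<alpha>)"
        "B$2$1 * a1 + B$2$2 * a2 = cB * rep2 (mob B \<alpha>)"
      using mob_rep[of B \<alpha>] dB by (auto simp: a1_def a2_def)
    have hA1: "A$1$1*b1 + A$1$2*b2 = e * rep1 \<alpha> + (1/\<mu>) * rep1 \<beta>" using Ab(1) by (simp add: a1_def b1_def)
    have hA2: "A$2$1*b1 + A$2$2*b2 = e * rep2 \<alpha> + (1/\<mu>) * rep2 \<beta>" using Ab(2) by (simp add: a2_def b2_def)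
    have hB1: "B$1$1*a1 + B$1$2*a2 = (1/lam) * rep1 \<alpha> + f * rep1 \<beta>" using Ba(1) by (simp add: a1_def b1_def)
    have hB2: "B$2$1*a1 + B$2$2*a2 = (1/lam) * rep2 \<alpha> + f * rep2 \<beta>" using Ba(2) by (simp add: a2_def b2_def)
    have hA1': "A$1$1*b1 + A$1$2*b2 = (1/\<mu>) * rep1 \<beta> + e * rep1 \<alpha>" using hA1 by simp
    have hA2': "A$2$1*b1 + A$2$2*b2 = (1/\<mu>) * rep2 \<beta> + e * rep2 \<alpha>" using hA2 by simp
    have hB1': "B$1$1*a1 + B$1$2*a2 = f * rep1 \<beta> + (1/lam) * rep1 \<alpha>" using hB1 by simp
    have hB2': "B$2$1*a1 + B$2$2*a2 = f * rep2 \<beta> + (1/lam) * rep2 \<alpha>" using hB2 by simp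
    have mp: "0 < \<mu>" "0 < lam" using mA mB by auto
    have Eeq: "E = rep1 \<alpha> * rep2 \<beta> - rep2 \<alpha> * rep1 \<beta>" by (simp add: E_def a1_def a2_def b1_def b2_def)
    have E3: "(rep1 \<beta> * rep2 \<alpha> - rep2 \<beta> * rep1 \<alpha>)^3 = -(E^3)"
      by (simp add: E_def a1_def a2_def b1_def b2_def power3_eq_cube algebra_simps)
    have eqe: "e * E^3 = \<mu> * (e * (1/\<mu>) * E^3)" using mp by simp
    have eqf: "f * E^3 = lam * ((1/lam) * f * E^3)" using mp by simp
    have cases3: "(e * E^3 \<le> 0 \<and> f * E^3 \<le> 0) \<or> (0 \<le> e * E^3 \<and> 0 \<le> f * E^3)"
      using alt False
    proof (elim disjE conjE)
      assume iA: "invariant_int A (ccw_int \<alpha> \<beta>)" and iB: "invariant_int B (ccw_int \<alpha> \<beta>)"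
      have pA: "mob A \<beta> \<in> ccw_int \<alpha> \<beta>" using iA ccw_end(1) by (auto simp: invariant_int_def)
      have pB: "mob B \<alpha> \<in> ccw_int \<alpha> \<beta>" using iB ccw_end(2) by (auto simp: invariant_int_def)
      have s1: "e * (1/\<mu>) * E^3 \<le> 0"
        using signs[OF False pA cA(2) cA(3) hA1 hA2] by (simp only: Eeq)
      have s2: "(1/lam) * f * E^3 \<le> 0"
        using signs[OF False pB cB(2) cB(3) hB1 hB2] by (simp only: Eeq)
      have "e * E^3 \<le> 0" using s1 mp by (simp add: divide_le_0_iff)
      moreover have "f * E^3 \<le> 0" using s2 mp by (simp add: divide_le_0_iff)
      ultimately show ?thesis by simp
    next
      assume iA: "invariant_int A (ccw_int \<beta> \<alpha>)" and iB: "invariant_int B (ccw_int \<beta> \<alpha>)"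
      have F: "\<beta> \<noteq> \<alpha>" using False by simp
      have pA: "mob A \<beta> \<in> ccw_int \<beta> \<alpha>" using iA ccw_end(2) by (auto simp: invariant_int_def)
      have pB: "mob B \<alpha> \<in> ccw_int \<beta> \<alpha>" using iB ccw_end(1) by (auto simp: invariant_int_def)
      have s1: "(1/\<mu>) * e * (-(E^3)) \<le> 0"
        using signs[OF F pA cA(2) cA(3) hA1' hA2'] by (simp only: E3)
      have s2: "f * (1/lam) * (-(E^3)) \<le> 0"
        using signs[OF F pB cB(2) cB(3) hB1' hB2'] by (simp only: E3)
      have s1': "0 \<le> e * (1/\<mu>) * E^3" using s1 by (simp add: algebra_simps)
      have s2': "0 \<le> (1/lam) * f * E^3" using s2 by (simp add: algebra_simps)
      have "0 \<le> e * E^3" using s1' mp by (simp add: zero_le_divide_iff)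
      moreover have "0 \<le> f * E^3" using s2' mp by (simp add: zero_le_divide_iff)
      ultimately show ?thesis by simp
    qed simp
    have sg: "(0 \<le> e \<and> 0 \<le> f) \<or> (e \<le> 0 \<and> f \<le> 0)"
    proof (cases "0 < E^3")
      case True
      then show ?thesis using cases3 by (auto simp: mult_le_0_iff zero_le_mult_iff)
    next
      case False
      then have "E^3 < 0" using Enz by (simp add: not_less order_le_less)
      then show ?thesis using cases3 by (auto simp: mult_le_0_iff zero_le_mult_iff)
    qed
    have D: "b1*a2 - a1*b2 \<noteq> 0" using E' by (simp add: algebra_simps)
    from sg show ?thesis
    proof
      assume "0 \<le> e \<and> 0 \<le> f"
      then show ?thesis
        using nondeg[OF dA dB ea[folded a1_def a2_def] eb[folded b1_def b2_def] Ab Ba D mA(1) mulam _ _ tr ks]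
        by simp
    next
      assume h: "e \<le> 0 \<and> f \<le> 0"
      have ea': "A$1$1*(-a1) + A$1$2*(-a2) = \<mu>*(-a1)" "A$2$1*(-a1) + A$2$2*(-a2) = \<mu>*(-a2)"
        using ea[folded a1_def a2_def] by (simp_all add: algebra_simps)
      have Ab': "A$1$1*b1 + A$1$2*b2 = (-e)*(-a1) + (1/\<mu>)*b1" "A$2$1*b1 + A$2$2*b2 = (-e)*(-a2) + (1/\<mu>)*b2"
        using Ab by simp_all
      have Ba': "B$1$1*(-a1) + B$1$2*(-a2) = (-f)*b1 + (1/lam)*(-a1)" "B$2$1*(-a1) + B$2$2*(-a2) = (-f)*b2 + (1/lam)*(-a2)"
        using Ba by (simp_all add: algebra_simps)
      have D': "b1*(-a2) - (-a1)*b2 \<noteq> 0" using D by (simp add: algebra_simps)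
      show ?thesis
        using nondeg[OF dA dB ea' eb[folded b1_def b2_def] Ab' Ba' D' mA(1) mulam _ _ tr ks] h
        by simp
    qed
  qed
qed


end
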